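(* Let $n\ge3$ and $2\le t\le\lceil n/2\rceil$, and let $\mathsf{X}=\mathsf{C}_n(t;i,i+1)$ with $1\le i<t$. Then \[F_2(\mathsf{X})=\begin{cases} n-1 & \text{if } i=1 \text{ and } t=2,\\ (2t-3)(n-t+1) & \text{otherwise.}\end{cases}\]
   Context: $\mathsf{C}_n(t;i,j)$ ($i<j$) denotes the $n$-cycle with vertices $v_1,\dots,v_n$ in cyclic order (edges $v_kv_{k+1}$ and $v_nv_1$), with marked (ramified) vertices $v_1$ and $v_t$, together with one additional edge between $v_i$ and $v_j$. $F_2$ is the number of spanning forests consisting of two trees, one containing $v_1$ and the other containing $v_t$. *)

theory Defs
  imports Complex_Main
begin

text \<open>Finite multigraphs: a vertex set V, an edge set E (edges are distinct objects,
  so parallel edges are allowed), and an endpoint map ends.\<close>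

definition adj_rel :: "('e \<Rightarrow> 'v \<times> 'v) \<Rightarrow> 'e set \<Rightarrow> ('v \<times> 'v) set" where
  "adj_rel ends F = {(u, v). \<exists>e\<in>F. ends e = (u, v) \<or> ends e = (v, u)}"

definition connected_in :: "('e \<Rightarrow> 'v \<times> 'v) \<Rightarrow> 'e set \<Rightarrow> 'v \<Rightarrow> 'v \<Rightarrow> bool" where
  "connected_in ends F u v \<longleftrightarrow> (u, v) \<in> (adj_rel ends F)\<^sup>*"

definition acyclic_edges :: "('e \<Rightarrow> 'v \<times> 'v) \<Rightarrow> 'e set \<Rightarrow> bool" where
  "acyclic_edges ends F \<longleftrightarrow>
     (\<forall>e\<in>F. \<not> connected_in ends (F - {e}) (fst (ends e)) (snd (ends e)))"

definition two_rooted_forests ::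
  "'v set \<Rightarrow> 'e set \<Rightarrow> ('e \<Rightarrow> 'v \<times> 'v) \<Rightarrow> 'v \<Rightarrow> 'v \<Rightarrow> 'e set set" where
  "two_rooted_forests V E ends r1 r2 =
     {F. F \<subseteq> E \<and> acyclic_edges ends F \<and>
         (\<forall>v\<in>V. connected_in ends F v r1 \<or> connected_in ends F v r2) \<and>
         \<not> connected_in ends F r1 r2}"

text \<open>The graph C_n(t;i,j): vertices 1..n (v_k is k), cycle edges k = 1..n joining
  k and k+1 (edge n joins n and 1), plus the extra edge 0 joining i and j.\<close>
definition Cn_ends :: "nat \<Rightarrow> nat \<Rightarrow> nat \<Rightarrow> nat \<Rightarrow> nat \<times> nat" where
  "Cn_ends n i j k = (if k = 0 then (i, j) else (k, if k = n then 1 else k + 1))"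

definition F2_Cn :: "nat \<Rightarrow> nat \<Rightarrow> nat \<Rightarrow> nat \<Rightarrow> nat" where
  "F2_Cn n t i j = card (two_rooted_forests {1..n} {0..n} (Cn_ends n i j) 1 t)"

end

theory Submission
  imports Defs
begin

lemma conn_refl: "connected_in ends F u u" by (simp add: connected_in_def)

lemma conn_trans: "connected_in ends F u v \<Longrightarrow> connected_in ends F v w \<Longrightarrow> connected_in ends F u w"
  unfolding connected_in_def by (rule rtrancl_trans)

lemma adj_sym: "sym (adj_rel ends F)" unfolding adj_rel_def sym_def by auto

lemma conn_sym: "connected_in ends F u v \<Longrightarrow> connected_in ends F v u"
  unfolding connected_in_def using sym_rtrancl[OF adj_sym, of ends F] unfolding sym_def by blast

lemma conn_edge: "e \<in> F \<Longrightarrow> ends e = (u,v) \<Longrightarrow> connected_in ends F u v"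
  unfolding connected_in_def adj_rel_def by (rule r_into_rtrancl) auto

lemma conn_closed:
  assumes "\<And>x y. (x,y) \<in> adj_rel ends F \<Longrightarrow> x \<in> S \<Longrightarrow> y \<in> S"
    and "connected_in ends F u v" and "u \<in> S"
  shows "v \<in> S"
proof -
  from assms(2) have "(u,v) \<in> (adj_rel ends F)\<^sup>*" unfolding connected_in_def .
  then show ?thesis
  proof (induction rule: rtrancl_induct)
    case base then show ?case using assms(3) .
  next
    case (step y z) then show ?case using assms(1) by blast
  qed
qed

context
  fixes n t i :: nat
  assumes n3: "n \<ge> 3" and t2: "2 \<le> t" and tn: "t \<le> n" and i1: "1 \<le> i" and it: "i < t"
begin

abbreviation "EE \<equiv> Cn_ends n i (i+1)"

lemma sep_closed:
  assumes "1 \<le> p" "p < q" "q \<le> n" "p \<notin> F" "q \<notin> F" "p = i \<or> q = i \<Longrightarrow> 0 \<notin> F"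
    "connected_in EE F u v" "u \<in> {p<..q}"
  shows "v \<in> {p<..q}"
proof (rule conn_closed[OF _ assms(7,8)])
  fix x y assume xy: "(x,y) \<in> adj_rel EE F" and x: "x \<in> {p<..q}"
  then obtain e where e: "e \<in> F" "EE e = (x,y) \<or> EE e = (y,x)" unfolding adj_rel_def by auto
  show "y \<in> {p<..q}"
  proof (cases "e = 0")
    case True then have "p \<noteq> i" "q \<noteq> i" using assms(6) e(1) by auto
    then show ?thesis using e(2) True x by (auto simp: Cn_ends_def)
  next
    case False
    have "e \<noteq> p" "e \<noteq> q" using e(1) assms(4,5) by auto
    then show ?thesis using False e(2) assms(1,2,3) x by (auto simp: Cn_ends_def split: if_splits)
  qed
qed

lemma sep:
  assumes "1 \<le> p" "p < q" "q \<le> n" "p \<notin> F" "q \<notin> F" "p = i \<or> q = i \<Longrightarrow> 0 \<notin> F"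
    "u \<in> {p<..q}" "v \<notin> {p<..q}"
  shows "\<not> connected_in EE F u v" "\<not> connected_in EE F v u"
  using sep_closed[OF assms(1-6), of u v] assms(7,8) conn_sym[of EE F v u] by blast+

lemma path_aux:
  "u + d \<le> n \<Longrightarrow> 1 \<le> u \<Longrightarrow> (\<forall>k. u \<le> k \<and> k < u + d \<longrightarrow> (k \<in> F \<or> (k = i \<and> 0 \<in> F)))
   \<Longrightarrow> connected_in EE F u (u + d)"
proof (induction d)
  case 0 then show ?case by (simp add: conn_refl)
next
  case (Suc d)
  let ?v = "u + d"
  have 1: "connected_in EE F u ?v" using Suc by auto
  have "?v \<in> F \<or> (?v = i \<and> 0 \<in> F)" using Suc.prems by auto
  then have "connected_in EE F ?v (Suc ?v)"
  proof
    assume "?v \<in> F" then show ?thesis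
      using Suc.prems by (intro conn_edge[of ?v]) (auto simp: Cn_ends_def)
  next
    assume "?v = i \<and> 0 \<in> F" then show ?thesis
      by (intro conn_edge[of 0]) (auto simp: Cn_ends_def)
  qed
  then show ?case using conn_trans[OF 1] by simp
qed

lemma path:
  assumes "1 \<le> u" "u \<le> v" "v \<le> n" "\<forall>k. u \<le> k \<and> k < v \<longrightarrow> (k \<in> F \<or> (k = i \<and> 0 \<in> F))"
  shows "connected_in EE F u v"
  using path_aux[of u "v - u" F] assms by auto

definition "Dom = {(a,b,c). a \<in> {1..<t} \<and> b \<in> {t..n} \<and> c \<in> {0,i} \<and> (a = i \<longrightarrow> c = 0)}"

abbreviation "FS \<equiv> two_rooted_forests {1..n} {0..n} EE 1 t"

lemma good:
  assumes a: "a \<in> {1..<t}" and b: "b \<in> {t..n}" and c: "c \<in> {0,i}" and ac: "a = i \<longrightarrow> c = 0"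
  shows "{0..n} - {a,b,c} \<in> FS"
proof -
  define F where "F = {0..n} - {a,b,c}"
  have acyc: "acyclic_edges EE F"
    unfolding acyclic_edges_def
  proof
    fix e assume e: "e \<in> F"
    show "\<not> connected_in EE (F - {e}) (fst (EE e)) (snd (EE e))"
    proof (cases "e = 0")
      case True
      then have ci: "c = i" "a \<noteq> i" using e c ac by (auto simp: F_def)
      show ?thesis
      proof (cases "a < i")
        case True
        show ?thesis using sep(1)[of a i "F - {e}" i "i+1"] True ci a b it tn \<open>e = 0\<close>
          by (auto simp: F_def Cn_ends_def)
      next
        case False
        show ?thesis using sep(2)[of i a "F - {e}" "i+1" i] False ci a b it tn \<open>e = 0\<close> i1
          by (auto simp: F_def Cn_ends_def)
      qed
    next
      case e0: False
      show ?thesis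
      proof (cases "e < t")
        case True
        have ea: "e \<noteq> a" "e \<ge> 1" "e \<le> n" using e e0 by (auto simp: F_def)
        have cond: "0 \<notin> F - {e}" if "a = i \<or> e = i"
          using that ac c e by (auto simp: F_def)
        show ?thesis
        proof (cases "a < e")
          case True
          show ?thesis using sep(1)[of a e "F - {e}" e "e+1"] True cond a b ea \<open>e < t\<close> tn e0
            by (auto simp: F_def Cn_ends_def)
        next
          case False
          show ?thesis using sep(2)[of e a "F - {e}" "e+1" e] False cond a b ea \<open>e < t\<close> tn e0
            by (auto simp: F_def Cn_ends_def)
        qed
      next
        case False
        have eb: "e \<noteq> b" "e \<ge> 1" "e \<le> n" using e e0 by (auto simp: F_def)
        show ?thesis
        proof (cases "b < e")
          case True
          show ?thesis using sep(1)[of b e "F - {e}" e "if e = n then 1 else e+1"] True b eb False it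
            by (auto simp: F_def Cn_ends_def)
        next
          case False
          show ?thesis using sep(2)[of e b "F - {e}" "e+1" e] False b eb \<open>\<not> e < t\<close> it e0
            by (auto simp: F_def Cn_ends_def)
        qed
      qed
    qed
  qed
  have span: "connected_in EE F v 1 \<or> connected_in EE F v t" if v: "v \<in> {1..n}" for v
  proof -
    have pres: "k \<in> F \<or> (k = i \<and> 0 \<in> F)" if "k \<in> {1..n}" "k \<noteq> a" "k \<noteq> b" for k
      using that c ac a b t2 by (auto simp: F_def)
    consider "v \<le> a" | "a < v" "v \<le> t" | "t \<le> v" "v \<le> b" | "b < v" by linarith
    then show ?thesis
    proof cases
      case 1
      then have "connected_in EE F 1 v" using a b v by (intro path allI impI pres) auto
      then show ?thesis by (metis conn_sym)
    next
      case 2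
      then have "connected_in EE F v t" using a b v tn by (intro path allI impI pres) auto
      then show ?thesis by blast
    next
      case 3
      then have "connected_in EE F t v" using a b v t2 by (intro path allI impI pres) auto
      then show ?thesis by (metis conn_sym)
    next
      case 4
      then have "connected_in EE F v n" using a b v by (intro path allI impI pres) auto
      moreover have "connected_in EE F n 1"
        using 4 a b v c n3 it by (intro conn_edge[of n]) (auto simp: F_def Cn_ends_def)
      ultimately show ?thesis using conn_trans by metis
    qed
  qed
  have nc: "\<not> connected_in EE F 1 t"
    using sep(2)[of a b F t 1] a b c ac it by (auto simp: F_def)
  show ?thesis
    using acyc span nc unfolding two_rooted_forests_def F_def[symmetric] by (auto simp: F_def)
qed


lemma bad:
  assumes F: "F \<in> FS"
  shows "\<exists>a b c. (a,b,c) \<in> Dom \<and> F = {0..n} - {a,b,c}"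
proof -
  have FE: "F \<subseteq> {0..n}" and acyc: "acyclic_edges EE F"
    and span: "\<And>v. v \<in> {1..n} \<Longrightarrow> connected_in EE F v 1 \<or> connected_in EE F v t"
    and nc: "\<not> connected_in EE F 1 t"
    using F unfolding two_rooted_forests_def by auto
  define cut where "cut k \<longleftrightarrow> k \<notin> F \<and> (k = i \<longrightarrow> 0 \<notin> F)" for k
  obtain a where a: "a \<in> {1..<t}" "cut a"
  proof (rule ccontr)
    assume "\<not> thesis"
    then have "\<forall>k. 1 \<le> k \<and> k < t \<longrightarrow> (k \<in> F \<or> (k = i \<and> 0 \<in> F))"
      using that unfolding cut_def by auto
    then have "connected_in EE F 1 t" using t2 tn by (intro path) auto
    then show False using nc by simp
  qed
  obtain b where b: "b \<in> {t..n}" "b \<notin> F"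
  proof (rule ccontr)
    assume "\<not> thesis"
    then have all: "\<forall>k. t \<le> k \<and> k \<le> n \<longrightarrow> k \<in> F" using that by auto
    then have "connected_in EE F t n" using t2 tn by (intro path) auto
    moreover have "connected_in EE F n 1" using all tn n3 by (intro conn_edge[of n]) (auto simp: Cn_ends_def)
    ultimately have "connected_in EE F t 1" by (rule conn_trans)
    then show False using nc conn_sym by metis
  qed
  have auni: "a' = a" if "a' \<in> {1..<t}" "cut a'" for a'
  proof (rule ccontr)
    assume ne: "a' \<noteq> a"
    define p where "p = min a a'"
    define q where "q = max a a'"
    have pq: "1 \<le> p" "p < q" "q < t" "p \<notin> F" "q \<notin> F" "p = i \<or> q = i \<Longrightarrow> 0 \<notin> F"
      using a that ne unfolding p_def q_def cut_def by (auto simp: min_def max_def split: if_splits)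
    have "q \<in> {1..n}" using pq tn by auto
    from span[OF this] show False
      using sep(1)[of p q F q 1] sep(1)[of p q F q t] pq tn by auto
  qed
  have buni: "b' = b" if "b' \<in> {t..n}" "b' \<notin> F" for b'
  proof (rule ccontr)
    assume ne: "b' \<noteq> b"
    define p where "p = min b b'"
    define q where "q = max b b'"
    have pq: "t \<le> p" "p < q" "q \<le> n" "p \<notin> F" "q \<notin> F"
      using b that ne unfolding p_def q_def by (auto simp: min_def max_def)
    have "q \<in> {1..n}" using pq t2 by auto
    from span[OF this] show False
      using sep(1)[of p q F q 1] sep(1)[of p q F q t] pq t2 it by auto
  qed
  have notboth: "\<not> (0 \<in> F \<and> i \<in> F)"
  proof
    assume h: "0 \<in> F \<and> i \<in> F"
    have "connected_in EE (F - {0}) i (i+1)"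
      using h i1 it tn by (intro conn_edge[of i]) (auto simp: Cn_ends_def)
    then show False using acyc h unfolding acyclic_edges_def by (auto simp: Cn_ends_def)
  qed
  define c where "c = (if 0 \<notin> F then 0 else i)"
  have dom: "(a,b,c) \<in> Dom" using a b unfolding Dom_def c_def cut_def by auto
  have "F = {0..n} - {a,b,c}"
  proof (intro equalityI subsetI)
    fix x assume x: "x \<in> F"
    then show "x \<in> {0..n} - {a,b,c}"
      using FE a b notboth i1 unfolding c_def cut_def by (cases "x = 0") auto
  next
    fix x assume x: "x \<in> {0..n} - {a,b,c}"
    show "x \<in> F"
    proof (rule ccontr)
      assume xF: "x \<notin> F"
      consider "x = 0" | "x = i" | "x \<in> {1..<t}" "x \<noteq> i" | "x \<in> {t..n}" using x by force
      then show False
      proof cases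
        case 1 then show ?thesis using x xF unfolding c_def by auto
      next
        case 2 then show ?thesis using x xF auni[of i] i1 it unfolding c_def cut_def by (auto split: if_splits)
      next
        case 3 then show ?thesis using x xF auni[of x] unfolding cut_def by auto
      next
        case 4 then show ?thesis using x xF buni[of x] by auto
      qed
    qed
  qed
  with dom show ?thesis by blast
qed

lemma FS_eq: "FS = (\<lambda>(a,b,c). {0..n} - {a,b,c}) ` Dom"
proof
  show "FS \<subseteq> (\<lambda>(a,b,c). {0..n} - {a,b,c}) ` Dom"
    using bad by fastforce
  show "(\<lambda>(a,b,c). {0..n} - {a,b,c}) ` Dom \<subseteq> FS"
    using good unfolding Dom_def by auto
qed


lemma inj_Dom: "inj_on (\<lambda>(a,b,c). {0..n} - {a,b,c}) Dom"
proof (rule inj_onI)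
  fix x y assume x: "x \<in> Dom" and y: "y \<in> Dom"
    and xy: "(\<lambda>(a,b,c). {0..n} - {a,b,c}) x = (\<lambda>(a,b,c). {0..n} - {a,b,c}) y"
  obtain a b c where xe: "x = (a,b,c)" by (cases x) auto
  obtain a' b' c' where ye: "y = (a',b',c')" by (cases y) auto
  have d: "(a,b,c) \<in> Dom" "(a',b',c') \<in> Dom" using x y xe ye by auto
  have eq: "{0..n} - {a,b,c} = {0..n} - {a',b',c'}" using xy xe ye by simp
  have s1: "{a,b,c} \<subseteq> {0..n}" "{a',b',c'} \<subseteq> {0..n}" using d it tn unfolding Dom_def by auto
  have S: "{a,b,c} = {a',b',c'}"
  proof -
    have "{a,b,c} = {0..n} - ({0..n} - {a,b,c})" using s1 by blast
    also have "\<dots> = {0..n} - ({0..n} - {a',b',c'})" using eq by simp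
    also have "\<dots> = {a',b',c'}" using s1 by blast
    finally show ?thesis .
  qed
  have r: "a \<ge> 1" "a < t" "t \<le> b" "c = 0 \<or> c = i" "a = i \<longrightarrow> c = 0"
          "a' \<ge> 1" "a' < t" "t \<le> b'" "c' = 0 \<or> c' = i" "a' = i \<longrightarrow> c' = 0"
    using d unfolding Dom_def by auto
  have "a \<in> {a',b',c'}" "b \<in> {a',b',c'}" "c \<in> {a',b',c'}"
       "a' \<in> {a,b,c}" "b' \<in> {a,b,c}" "c' \<in> {a,b,c}" using S by auto
  then have "a = a' \<and> b = b' \<and> c = c'" using r it i1 by auto
  then show "x = y" using xe ye by simp
qed

lemma Dom_split: "Dom = ({i} \<times> {t..n} \<times> {0}) \<union> (({1..<t} - {i}) \<times> {t..n} \<times> {0,i})"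
  unfolding Dom_def using i1 it by auto

lemma card_Dom: "card Dom = (2*t-3) * (n-t+1)"
proof -
  have disj: "({i} \<times> {t..n} \<times> {0}) \<inter> (({1..<t} - {i}) \<times> {t..n} \<times> ({0,i}::nat set)) = {}" by auto
  have c1: "card ({Suc 0..<t} - {i}) = t - 2" using i1 it by (simp add: card_Diff_singleton)
  have c2: "card ({0,i}::nat set) = 2" using i1 by simp
  have "card Dom = (n - t + 1) + (t - 2) * ((n - t + 1) * 2)"
    unfolding Dom_split by (subst card_Un_disjoint) (auto simp: card_cartesian_product c1 c2 disj tn Suc_diff_le)
  also have "\<dots> = (2*t-3) * (n-t+1)" using t2
  proof -
    obtain s where "t = s + 2" using t2 by (metis add.commute le_Suc_ex)
    then show ?thesis by (simp add: algebra_simps)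
  qed
  finally show ?thesis .
qed

lemma card_FS: "card FS = (2*t-3) * (n-t+1)"
  unfolding FS_eq by (simp add: card_image[OF inj_Dom] card_Dom)

end

theorem lemma7p5:
  fixes n t i :: nat
  assumes "n \<ge> 3" and "2 \<le> t" and "t \<le> nat (ceiling (real n / 2))"
    and "1 \<le> i" and "i < t"
  shows "F2_Cn n t i (i + 1) =
    (if i = 1 \<and> t = 2 then n - 1 else (2 * t - 3) * (n - t + 1))"
proof -
  have "ceiling (real n / 2) \<le> int n" by (simp add: ceiling_le_iff)
  then have tn: "t \<le> n" using assms(3) by linarith
  have "F2_Cn n t i (i + 1) = (2 * t - 3) * (n - t + 1)"
    unfolding F2_Cn_def using card_FS[OF assms(1,2) tn assms(4,5)] .
  then show ?thesis using assms(1) by auto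
qed

end
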